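(* Let $a,n\in\mathbb{N}$, $k_1,\ldots,k_n\in\mathbb{N}$, $K=\operatorname{lcm}(k_1,\ldots,k_n)$, let $f_1,\ldots,f_n,g_1,\ldots,g_n$ be arbitrary arithmetic functions, and put $H(m)=\prod_{i=1}^n s^{(1)}_{f_i,g_i,\mathbf 1}(k_i,m)$. For $N\in\mathbb{N}$ let $\Psi^{(a)}(N)=\sum_{1\le\ell\le N^a,\ (\ell,N^a)_a=1}\omega(\ell)$ and $\Phi^{(a)}(N)=\#\{\ell\in\{1,\ldots,N^a\}:(\ell,N^a)_a=1\}$. (i) If $\omega$ is completely multiplicative, then $\sum_{j=1}^{K^a}\omega(j)\prod_{i=1}^n s^{(a)}_{f_i,g_i,\mathbf 1}(k_i,j)=\sum_{d|K}\omega(d)^a H(d)\Psi^{(a)}(K/d)$. (ii) If $\omega$ is completely additive, then $\sum_{j=1}^{K^a}\omega(j)\prod_{i=1}^n s^{(a)}_{f_i,g_i,\mathbf 1}(k_i,j)=\sum_{d|K}\omega(d^a)H(d)\Phi^{(a)}(K/d)+\sum_{d|K}H(d)\Psi^{(a)}(K/d)$.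
   Context: An arithmetic function is a map $\mathbb{N}\to\mathbb{C}$. For $a\in\mathbb{N}$, $s^{(a)}_{f,g,\mathbf 1}(k,j)=\sum_{d|k,\ d^a|j} f(d)\,g(k/d)$ (so $s^{(1)}_{f,g,\mathbf 1}(k,j)=\sum_{d|\gcd(k,j)}f(d)g(k/d)$). For $j,N\in\mathbb{N}$, the generalized gcd $(j,N^a)_a$ is the largest $d\in\mathbb{N}$ with $d|N$ and $d^a|j$. $\omega$ is completely multiplicative if $\omega(1)=1$ and $\omega(mn)=\omega(m)\omega(n)$; completely additive if $\omega(mn)=\omega(m)+\omega(n)$. *)

theory Defs
  imports Main "HOL-Computational_Algebra.Primes" Complex_Main
begin

definition sfun :: "nat \<Rightarrow> (nat \<Rightarrow> complex) \<Rightarrow> (nat \<Rightarrow> complex) \<Rightarrow> nat \<Rightarrow> nat \<Rightarrow> complex" where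
  "sfun a f g k j = (\<Sum>d\<in>{d. d dvd k \<and> d ^ a dvd j}. f d * g (k div d))"

text \<open>Generalized gcd (j, N^a)_a: the largest d with d | N and d^a | j.\<close>
definition gen_gcd :: "nat \<Rightarrow> nat \<Rightarrow> nat \<Rightarrow> nat" where
  "gen_gcd a j N = Max {d. d dvd N \<and> d ^ a dvd j}"

definition compl_mult :: "(nat \<Rightarrow> complex) \<Rightarrow> bool" where
  "compl_mult w \<longleftrightarrow> w 1 = 1 \<and> (\<forall>m n. m > 0 \<longrightarrow> n > 0 \<longrightarrow> w (m * n) = w m * w n)"

definition compl_add :: "(nat \<Rightarrow> complex) \<Rightarrow> bool" where
  "compl_add w \<longleftrightarrow> (\<forall>m n. m > 0 \<longrightarrow> n > 0 \<longrightarrow> w (m * n) = w m + w n)"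

definition Psi :: "nat \<Rightarrow> (nat \<Rightarrow> complex) \<Rightarrow> nat \<Rightarrow> complex" where
  "Psi a w N = (\<Sum>l\<in>{l\<in>{1..N ^ a}. gen_gcd a l N = 1}. w l)"

definition Phi :: "nat \<Rightarrow> nat \<Rightarrow> nat" where
  "Phi a N = card {l\<in>{1..N ^ a}. gen_gcd a l N = 1}"

end

theory Submission
  imports Defs
begin

lemma lcm_pow_nat: "lcm (x::nat) y ^ a = lcm (x^a) (y^a)"
proof (cases "x = 0 \<or> y = 0")
  case True then show ?thesis by (cases a) auto
next
  case False
  have e1: "gcd x y * lcm x y = x * y" by (rule prod_gcd_lcm_nat[symmetric])
  have e2: "gcd (x^a) (y^a) * lcm (x^a) (y^a) = x^a * y^a" by (rule prod_gcd_lcm_nat[symmetric])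
  have "gcd x y ^ a * lcm x y ^ a = gcd x y ^ a * lcm (x^a) (y^a)"
    using e1 e2 by (simp add: power_mult_distrib[symmetric])
  moreover have "gcd x y ^ a > 0" using False by simp
  ultimately show ?thesis by (metis nat_mult_eq_cancel1)
qed

lemma gg_props:
  assumes "K > 0" "j > 0"
  shows "gen_gcd a j K dvd K" "gen_gcd a j K ^ a dvd j"
    "\<And>e. e dvd K \<Longrightarrow> e ^ a dvd j \<Longrightarrow> e dvd gen_gcd a j K"
proof -
  let ?S = "{d. d dvd K \<and> d ^ a dvd j}"
  have fin: "finite ?S" using assms by (auto intro: finite_subset[of _ "{..K}"] dvd_imp_le)
  have ne: "1 \<in> ?S" by simp
  have mem: "gen_gcd a j K \<in> ?S" unfolding gen_gcd_def using fin ne Max_in by blast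
  then show "gen_gcd a j K dvd K" "gen_gcd a j K ^ a dvd j" by auto
  fix e assume e: "e dvd K" "e ^ a dvd j"
  let ?D = "gen_gcd a j K"
  have "lcm e ?D \<in> ?S" using e mem by (auto simp: lcm_pow_nat)
  hence "lcm e ?D \<le> ?D" unfolding gen_gcd_def using fin by simp
  moreover have "?D dvd lcm e ?D" by simp
  moreover have "lcm e ?D > 0" using e mem assms
    by (metis bot_nat_0.not_eq_extremum dvd_0_left_iff lcm_eq_0_iff mem_Collect_eq)
  ultimately have "lcm e ?D = ?D" by (meson dvd_imp_le le_antisym)
  then show "e dvd ?D" by (metis dvd_lcm1)
qed

lemma gg_eqI:
  assumes "K > 0" "j > 0" "D dvd K" "D ^ a dvd j" "\<And>e. e dvd K \<Longrightarrow> e ^ a dvd j \<Longrightarrow> e dvd D"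
  shows "gen_gcd a j K = D"
proof -
  have "gen_gcd a j K dvd D" by (rule assms(5)[OF gg_props(1,2)[OF assms(1,2)]])
  moreover have "D dvd gen_gcd a j K" by (rule gg_props(3)[OF assms(1,2,3,4)])
  ultimately show ?thesis by (simp add: dvd_antisym)
qed

lemma sfun_gg:
  assumes "K > 0" "j > 0" "k dvd K"
  shows "sfun a F G k j = sfun 1 F G k (gen_gcd a j K)"
proof -
  have *: "d ^ a dvd j \<longleftrightarrow> d dvd gen_gcd a j K" if "d dvd k" for d
  proof
    assume "d ^ a dvd j"
    then show "d dvd gen_gcd a j K" using gg_props(3)[OF assms(1,2)] assms(3) that dvd_trans by blast
  next
    assume "d dvd gen_gcd a j K"
    then show "d ^ a dvd j" using gg_props(2)[OF assms(1,2)]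
      by (metis dvd_power_same dvd_trans)
  qed
  have "{d. d dvd k \<and> d ^ a dvd j} = {d. d dvd k \<and> d ^ 1 dvd gen_gcd a j K}"
    using * by auto
  then show ?thesis unfolding sfun_def by simp
qed

lemma fiber:
  assumes "K > 0" "d dvd K"
  shows "{j \<in> {1..K^a}. gen_gcd a j K = d} =
     (\<lambda>l. d^a * l) ` {l \<in> {1..(K div d)^a}. gen_gcd a l (K div d) = 1}"
proof -
  obtain m where m: "K = d * m" using assms by blast
  have d0: "d > 0" "m > 0" using assms m by auto
  have Km: "K div d = m" using m d0 by simp
  show ?thesis unfolding Km
  proof (intro equalityI subsetI)
    fix j assume "j \<in> {j \<in> {1..K^a}. gen_gcd a j K = d}"
    hence j: "j \<in> {1..K^a}" "gen_gcd a j K = d" by auto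
    have j0: "j > 0" using j by auto
    obtain l where l: "j = d^a * l" using gg_props(2)[OF assms(1) j0] j by (auto elim: dvdE)
    have "l \<ge> 1" using l j0 by (cases l) auto
    moreover have "l \<le> m^a" using j l m d0 by (simp add: power_mult_distrib)
    moreover have "gen_gcd a l m = 1"
    proof (rule gg_eqI)
      show "0 < l" using \<open>l \<ge> 1\<close> by simp
      fix e assume e: "e dvd m" "e ^ a dvd l"
      have "(d*e) dvd K" using e m by simp
      moreover have "(d*e)^a dvd j" using e l by (simp add: power_mult_distrib)
      ultimately have "d * e dvd d" using gg_props(3)[OF assms(1) j0] j by metis
      then show "e dvd 1" using d0 by simp
    qed (use d0 in auto)
    ultimately show "j \<in> (\<lambda>l. d^a * l) ` {l \<in> {1..m^a}. gen_gcd a l m = 1}" using l by auto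
  next
    fix x assume "x \<in> (\<lambda>l. d^a * l) ` {l \<in> {1..m^a}. gen_gcd a l m = 1}"
    then obtain l where l: "l \<in> {1..m^a}" "gen_gcd a l m = 1" and x: "x = d^a*l" by auto
    have l0: "l > 0" using l by auto
    have "d^a*l \<in> {1..K^a}" using l d0 m by (simp add: power_mult_distrib)
    moreover
    let ?D = "gen_gcd a (d^a*l) K"
    have j0: "d^a*l > 0" using d0 l0 by simp
    have "d dvd ?D" using gg_props(3)[OF assms(1) j0] assms by simp
    then obtain t where t: "?D = d * t" by blast
    have "d * t dvd d * m" using gg_props(1)[OF assms(1) j0] t m by metis
    hence tm: "t dvd m" using d0 by simp
    have "(d*t)^a dvd d^a * l" using gg_props(2)[OF assms(1) j0] t by metis
    hence "d^a * t^a dvd d^a * l" by (simp add: power_mult_distrib)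
    hence "t^a dvd l" using d0 by simp
    hence "t dvd gen_gcd a l m" using gg_props(3)[OF d0(2) l0] tm by simp
    hence "t = 1" using l by simp
    hence "?D = d" using t by simp
    ultimately show "x \<in> {j \<in> {1..K^a}. gen_gcd a j K = d}" using x by simp
  qed
qed

theorem mainTheorem9:
  fixes a n :: nat and k :: "nat \<Rightarrow> nat" and f g :: "nat \<Rightarrow> nat \<Rightarrow> complex"
    and w :: "nat \<Rightarrow> complex" and K :: nat and H :: "nat \<Rightarrow> complex"
  assumes "a \<ge> 1" and "n \<ge> 1" and "\<forall>i\<in>{1..n}. k i \<ge> 1"
    and "K = Lcm (k ` {1..n})"
    and "H = (\<lambda>m. \<Prod>i=1..n. sfun 1 (f i) (g i) (k i) m)"
  shows "(compl_mult w \<longrightarrow>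
            (\<Sum>j=1..K ^ a. w j * (\<Prod>i=1..n. sfun a (f i) (g i) (k i) j))
          = (\<Sum>d\<in>{d. d dvd K}. w d ^ a * H d * Psi a w (K div d)))
       \<and> (compl_add w \<longrightarrow>
            (\<Sum>j=1..K ^ a. w j * (\<Prod>i=1..n. sfun a (f i) (g i) (k i) j))
          = (\<Sum>d\<in>{d. d dvd K}. w (d ^ a) * H d * of_nat (Phi a (K div d)))
            + (\<Sum>d\<in>{d. d dvd K}. H d * Psi a w (K div d)))"
proof -
  have "0 \<notin> k ` {1..n}" using assms(3) by force
  hence "Lcm (k ` {1..n}) \<noteq> 0" using Lcm_0_iff[of "k ` {1..n}"] by simp
  hence K0: "K > 0" using assms(4) by (simp del: Lcm_0_iff_nat)
  have kK: "k i dvd K" if "i \<in> {1..n}" for i using assms(4) that by simp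
  define L where "L d = {l \<in> {1..(K div d)^a}. gen_gcd a l (K div d) = 1}" for d
  have finD: "finite {d. d dvd K}" using K0 by simp
  have key: "(\<Sum>j=1..K ^ a. w j * (\<Prod>i=1..n. sfun a (f i) (g i) (k i) j))
     = (\<Sum>d\<in>{d. d dvd K}. H d * (\<Sum>l\<in>L d. w (d^a * l)))"
  proof -
    have "(\<Sum>j=1..K ^ a. w j * (\<Prod>i=1..n. sfun a (f i) (g i) (k i) j))
        = (\<Sum>j=1..K ^ a. w j * H (gen_gcd a j K))"
    proof (rule sum.cong[OF refl])
      fix j assume "j \<in> {1..K^a}"
      hence j0: "j > 0" by auto
      show "w j * (\<Prod>i=1..n. sfun a (f i) (g i) (k i) j) = w j * H (gen_gcd a j K)"
        unfolding assms(5) using sfun_gg[OF K0 j0 kK] by simp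
    qed
    also have "\<dots> = (\<Sum>d\<in>{d. d dvd K}. \<Sum>j\<in>{j \<in> {1..K^a}. gen_gcd a j K = d}. w j * H (gen_gcd a j K))"
      by (rule sum.group[symmetric]) (use finD gg_props(1)[OF K0] in auto)
    also have "\<dots> = (\<Sum>d\<in>{d. d dvd K}. H d * (\<Sum>l\<in>L d. w (d^a * l)))"
    proof (rule sum.cong[OF refl])
      fix d assume d: "d \<in> {d. d dvd K}"
      hence d0: "d > 0" using K0 by (auto intro: Nat.gr0I)
      have "(\<Sum>j\<in>{j \<in> {1..K^a}. gen_gcd a j K = d}. w j * H (gen_gcd a j K))
          = (\<Sum>j\<in>{j \<in> {1..K^a}. gen_gcd a j K = d}. w j * H d)"
        by (rule sum.cong) auto
      also have "\<dots> = (\<Sum>j\<in>(\<lambda>l. d^a * l) ` L d. w j * H d)"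
        unfolding L_def using fiber[OF K0] d by simp
      also have "\<dots> = (\<Sum>l\<in>L d. w (d^a * l) * H d)"
        using d0 by (subst sum.reindex) (auto simp: inj_on_def)
      finally show "(\<Sum>j\<in>{j \<in> {1..K^a}. gen_gcd a j K = d}. w j * H (gen_gcd a j K))
          = H d * (\<Sum>l\<in>L d. w (d^a * l))"
        by (simp add: sum_distrib_left mult.commute)
    qed
    finally show ?thesis .
  qed
  have Lpos: "l > 0" if "l \<in> L d" for l d using that unfolding L_def by auto
  show ?thesis
  proof safe
    assume cm: "compl_mult w"
    have mul: "w (x*y) = w x * w y" if "x > 0" "y > 0" for x y
      using cm that unfolding compl_mult_def by blast
    have w1: "w 1 = 1" using cm unfolding compl_mult_def by blast
    have pw: "w (d ^ m) = w d ^ m" if "d > 0" for d m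
    proof (induction m)
      case 0 then show ?case using w1 by simp
    next
      case (Suc m)
      have "w (d ^ Suc m) = w (d * d ^ m)" by simp
      also have "\<dots> = w d * w (d ^ m)" by (rule mul) (use that in simp_all)
      finally show ?case using Suc by simp
    qed
    show "(\<Sum>j=1..K ^ a. w j * (\<Prod>i=1..n. sfun a (f i) (g i) (k i) j))
          = (\<Sum>d\<in>{d. d dvd K}. w d ^ a * H d * Psi a w (K div d))"
      unfolding key
    proof (rule sum.cong[OF refl])
      fix d assume d: "d \<in> {d. d dvd K}"
      hence d0: "d > 0" using K0 by (auto intro: Nat.gr0I)
      have "(\<Sum>l\<in>L d. w (d^a * l)) = (\<Sum>l\<in>L d. w d ^ a * w l)"
        proof (rule sum.cong[OF refl])
        fix l assume "l \<in> L d"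
        hence "l > 0" by (rule Lpos)
        hence "w (d^a * l) = w (d^a) * w l" by (intro mul) (use d0 in simp_all)
        then show "w (d^a * l) = w d ^ a * w l" using pw[OF d0] by simp
      qed
      then show "H d * (\<Sum>l\<in>L d. w (d^a * l)) = w d ^ a * H d * Psi a w (K div d)"
        unfolding Psi_def L_def by (simp add: sum_distrib_left mult_ac)
    qed
  next
    assume ca: "compl_add w"
    have "(\<Sum>d\<in>{d. d dvd K}. H d * (\<Sum>l\<in>L d. w (d^a * l)))
       = (\<Sum>d\<in>{d. d dvd K}. w (d ^ a) * H d * of_nat (Phi a (K div d)) + H d * Psi a w (K div d))"
    proof (rule sum.cong[OF refl])
      fix d assume d: "d \<in> {d. d dvd K}"
      hence d0: "d > 0" using K0 by (auto intro: Nat.gr0I)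
      have "(\<Sum>l\<in>L d. w (d^a * l)) = (\<Sum>l\<in>L d. w (d ^ a) + w l)"
        proof (rule sum.cong[OF refl])
        fix l assume "l \<in> L d"
        hence "l > 0" by (rule Lpos)
        then show "w (d^a * l) = w (d^a) + w l" using ca d0 unfolding compl_add_def by simp
      qed
      also have "\<dots> = of_nat (card (L d)) * w (d^a) + (\<Sum>l\<in>L d. w l)"
        by (simp add: sum.distrib)
      finally show "H d * (\<Sum>l\<in>L d. w (d^a * l)) = w (d ^ a) * H d * of_nat (Phi a (K div d)) + H d * Psi a w (K div d)"
        unfolding Psi_def Phi_def L_def by (simp add: algebra_simps)
    qed
    then show "(\<Sum>j=1..K ^ a. w j * (\<Prod>i=1..n. sfun a (f i) (g i) (k i) j))
          = (\<Sum>d\<in>{d. d dvd K}. w (d ^ a) * H d * of_nat (Phi a (K div d)))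
            + (\<Sum>d\<in>{d. d dvd K}. H d * Psi a w (K div d))"
      unfolding key by (simp add: sum.distrib)
  qed
qed

end
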